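(* Let $E$ be an effect algebra and $(B,v)$ a unital Abelian po-group. Then there is an isomorphism of generalized effect algebras $$[E,\Gamma(B,v)]\cong[\mathrm{Gr}(E),(B,v)]_{\mathrm{GEA}},$$ natural in both $E$ and $(B,v)$, given (from right to left) by $g\mapsto g\circ\eta_E$.
   Context: An effect algebra is a partial algebra $(E;\oplus,',0,1)$ with $\oplus$ commutative and associative (Kleene identities), $a\oplus b=1$ iff $b=a'$, and $a\oplus1$ defined iff $a=0$. For an Abelian po-group $B$ and $v\in B^+$, $\Gamma(B,v)$ is the interval $\{b:0\le b\le v\}$ as an effect algebra ($a\oplus b=a+b$ defined iff $a+b\le v$, $a'=v-a$). The universal group of $E$ is a unital Abelian po-group $(\mathrm{Gr}(E),u)$ together with an effect algebra homomorphism $\eta_E\colon E\to\Gamma(\mathrm{Gr}(E),u)$ such that every effect algebra homomorphism $E\to\Gamma(B,w)$ factors as $\Gamma(g)\circ\eta_E$ for a unique order-preserving group homomorphism $g\colon\mathrm{Gr}(E)\to B$ with $g(u)=w$ (this holds for any $w\in B^+$). $[E,F]$ denotes the generalized effect algebra of maps $E\to F$ preserving $0$ and existing orthosums, with pointwise partial sum. For unital po-groups $(A,u)$, $(B,v)$, $[A,B]_{\mathrm{GEA}}$ is the set of order-preserving group homomorphisms $g\colon A\to B$ with $g(u)\le v$, made into a generalized effect algebra by $g\perp h$ iff $g(u)+h(u)\le v$, with pointwise sum and the zero map as $0$. *)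

theory Defs
  imports "HOL-Library.FuncSet"
begin

record 'a pa =
  pcarrier :: "'a set"
  pplus    :: "'a \<Rightarrow> 'a \<Rightarrow> 'a option"
  pzero    :: 'a

record 'a ea = "'a pa" +
  ea_compl :: "'a \<Rightarrow> 'a"
  ea_one   :: 'a

text \<open>Effect algebra (E; oplus, ', 0, 1): commutativity and associativity as Kleene identities,
  a oplus b = 1 iff b = a', and a oplus 1 defined iff a = 0.\<close>
definition effect_algebra :: "('a, 'z) ea_scheme \<Rightarrow> bool" where
  "effect_algebra E \<longleftrightarrow>
     pzero E \<in> pcarrier E \<and> ea_one E \<in> pcarrier E \<and>
     (\<forall>a\<in>pcarrier E. ea_compl E a \<in> pcarrier E) \<and>
     (\<forall>a\<in>pcarrier E. \<forall>b\<in>pcarrier E. \<forall>c. pplus E a b = Some c \<longrightarrow> c \<in> pcarrier E) \<and>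
     (\<forall>a\<in>pcarrier E. \<forall>b\<in>pcarrier E. pplus E a b = pplus E b a) \<and>
     (\<forall>a\<in>pcarrier E. \<forall>b\<in>pcarrier E. \<forall>c\<in>pcarrier E.
        Option.bind (pplus E a b) (\<lambda>x. pplus E x c) = Option.bind (pplus E b c) (\<lambda>y. pplus E a y)) \<and>
     (\<forall>a\<in>pcarrier E. \<forall>b\<in>pcarrier E. pplus E a b = Some (ea_one E) \<longleftrightarrow> b = ea_compl E a) \<and>
     (\<forall>a\<in>pcarrier E. pplus E a (ea_one E) \<noteq> None \<longleftrightarrow> a = pzero E)"

definition gea :: "('a, 'z) pa_scheme \<Rightarrow> bool" where
  "gea A \<longleftrightarrow>
     pzero A \<in> pcarrier A \<and>
     (\<forall>a\<in>pcarrier A. \<forall>b\<in>pcarrier A. \<forall>c. pplus A a b = Some c \<longrightarrow> c \<in> pcarrier A) \<and>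
     (\<forall>a\<in>pcarrier A. \<forall>b\<in>pcarrier A. pplus A a b = pplus A b a) \<and>
     (\<forall>a\<in>pcarrier A. \<forall>b\<in>pcarrier A. \<forall>c\<in>pcarrier A.
        Option.bind (pplus A a b) (\<lambda>x. pplus A x c) = Option.bind (pplus A b c) (\<lambda>y. pplus A a y)) \<and>
     (\<forall>a\<in>pcarrier A. pplus A a (pzero A) = Some a) \<and>
     (\<forall>a\<in>pcarrier A. \<forall>b\<in>pcarrier A. \<forall>c\<in>pcarrier A.
        pplus A a b \<noteq> None \<and> pplus A a b = pplus A a c \<longrightarrow> b = c) \<and>
     (\<forall>a\<in>pcarrier A. \<forall>b\<in>pcarrier A. pplus A a b = Some (pzero A) \<longrightarrow> a = pzero A \<and> b = pzero A)"

definition gea_iso :: "('a, 'z) pa_scheme \<Rightarrow> ('b, 'y) pa_scheme \<Rightarrow> ('a \<Rightarrow> 'b) \<Rightarrow> bool" where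
  "gea_iso A A' \<phi> \<longleftrightarrow>
     bij_betw \<phi> (pcarrier A) (pcarrier A') \<and> \<phi> (pzero A) = pzero A' \<and>
     (\<forall>a\<in>pcarrier A. \<forall>b\<in>pcarrier A. pplus A' (\<phi> a) (\<phi> b) = map_option \<phi> (pplus A a b))"

definition ea_morphism :: "('a, 'z) ea_scheme \<Rightarrow> ('b, 'y) ea_scheme \<Rightarrow> ('a \<Rightarrow> 'b) \<Rightarrow> bool" where
  "ea_morphism E F \<phi> \<longleftrightarrow>
     (\<forall>a\<in>pcarrier E. \<phi> a \<in> pcarrier F) \<and> \<phi> (ea_one E) = ea_one F \<and>
     (\<forall>a\<in>pcarrier E. \<forall>b\<in>pcarrier E. \<forall>c. pplus E a b = Some c \<longrightarrow> pplus F (\<phi> a) (\<phi> b) = Some (\<phi> c))"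

text \<open>Abelian po-groups are the types of class ordered_ab_group_add (the whole type is the group).\<close>

definition order_unit :: "'g::ordered_ab_group_add \<Rightarrow> bool" where
  "order_unit u \<longleftrightarrow> 0 \<le> u \<and>
     (\<forall>x. \<exists>n::nat. - (\<Sum>_<n. u) \<le> x \<and> x \<le> (\<Sum>_<n. u))"

definition pogroup_hom :: "('g::ordered_ab_group_add \<Rightarrow> 'b::ordered_ab_group_add) \<Rightarrow> bool" where
  "pogroup_hom g \<longleftrightarrow> (\<forall>x y. g (x + y) = g x + g y) \<and> mono g"

definition Gamma :: "'b::ordered_ab_group_add \<Rightarrow> 'b ea" where
  "Gamma v = \<lparr> pcarrier = {b. 0 \<le> b \<and> b \<le> v},
               pplus = (\<lambda>a b. if a + b \<le> v then Some (a + b) else None),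
               pzero = 0,
               ea_compl = (\<lambda>a. v - a),
               ea_one = v \<rparr>"

text \<open>Universal group (Gr(E),u) with eta.  Since HOL cannot quantify over types inside a
  formula, the universal property is required for all targets (B,w) in a given type 'b.\<close>
definition universal_group ::
  "('e, 'z) ea_scheme \<Rightarrow> 'g::ordered_ab_group_add \<Rightarrow> ('e \<Rightarrow> 'g) \<Rightarrow> 'b::ordered_ab_group_add itself \<Rightarrow> bool" where
  "universal_group E u \<eta> T \<longleftrightarrow>
     order_unit u \<and> ea_morphism E (Gamma u) \<eta> \<and>
     (\<forall>(w::'b) \<phi>. 0 \<le> w \<and> ea_morphism E (Gamma w) \<phi> \<longrightarrow>
        (\<exists>!g. pogroup_hom g \<and> g u = w \<and> (\<forall>x\<in>pcarrier E. g (\<eta> x) = \<phi> x)))"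

definition ea_hom_gea :: "('a, 'z) ea_scheme \<Rightarrow> ('b, 'y) ea_scheme \<Rightarrow> ('a \<Rightarrow> 'b) pa" where
  "ea_hom_gea E F =
     \<lparr> pcarrier = {f \<in> extensional (pcarrier E).
                    (\<forall>a\<in>pcarrier E. f a \<in> pcarrier F) \<and> f (pzero E) = pzero F \<and>
                    (\<forall>a\<in>pcarrier E. \<forall>b\<in>pcarrier E. \<forall>c. pplus E a b = Some c \<longrightarrow>
                        pplus F (f a) (f b) = Some (f c))},
       pplus = (\<lambda>f g. if (\<forall>a\<in>pcarrier E. pplus F (f a) (g a) \<noteq> None)
                        then Some (restrict (\<lambda>a. the (pplus F (f a) (g a))) (pcarrier E))
                        else None),
       pzero = restrict (\<lambda>_. pzero F) (pcarrier E) \<rparr>"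

definition po_hom_gea :: "'g::ordered_ab_group_add \<Rightarrow> 'b::ordered_ab_group_add \<Rightarrow> ('g \<Rightarrow> 'b) pa" where
  "po_hom_gea u v =
     \<lparr> pcarrier = {g. pogroup_hom g \<and> g u \<le> v},
       pplus = (\<lambda>g h. if g u + h u \<le> v then Some (\<lambda>x. g x + h x) else None),
       pzero = (\<lambda>_. 0) \<rparr>"

end

theory Submission
  imports Defs
begin

lemma ea_facts:
  assumes "effect_algebra E"
  shows "pzero E \<in> pcarrier E" "ea_one E \<in> pcarrier E"
    "\<And>a. a \<in> pcarrier E \<Longrightarrow> ea_compl E a \<in> pcarrier E"
    "\<And>a b c. a \<in> pcarrier E \<Longrightarrow> b \<in> pcarrier E \<Longrightarrow> pplus E a b = Some c \<Longrightarrow> c \<in> pcarrier E"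
    "\<And>a b. a \<in> pcarrier E \<Longrightarrow> b \<in> pcarrier E \<Longrightarrow> pplus E a b = pplus E b a"
    "\<And>a b c. a \<in> pcarrier E \<Longrightarrow> b \<in> pcarrier E \<Longrightarrow> c \<in> pcarrier E \<Longrightarrow>
        Option.bind (pplus E a b) (\<lambda>x. pplus E x c) = Option.bind (pplus E b c) (\<lambda>y. pplus E a y)"
    "\<And>a b. a \<in> pcarrier E \<Longrightarrow> b \<in> pcarrier E \<Longrightarrow> pplus E a b = Some (ea_one E) \<longleftrightarrow> b = ea_compl E a"
    "\<And>a. a \<in> pcarrier E \<Longrightarrow> pplus E a (ea_one E) \<noteq> None \<longleftrightarrow> a = pzero E"
  using assms unfolding effect_algebra_def by blast+

lemma ea_compl_sum:
  assumes "effect_algebra E" "a \<in> pcarrier E"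
  shows "pplus E a (ea_compl E a) = Some (ea_one E)"
  using ea_facts[OF assms(1)] assms(2) by blast

lemma ea_zero_right:
  assumes E: "effect_algebra E" and b: "b \<in> pcarrier E"
  shows "pplus E b (pzero E) = Some b"
proof -
  note F = ea_facts[OF E]
  let ?c = "ea_compl E" and ?o = "ea_one E" and ?z = "pzero E"
  have o1: "pplus E ?o (?c ?o) = Some ?o" using ea_compl_sum[OF E F(2)] .
  hence "pplus E (?c ?o) ?o = Some ?o" using F(2,3,5) by metis
  hence z: "?c ?o = ?z" using F(2,3,8) by (metis option.distinct(1))
  have ii: "pplus E (?c a) ?z = Some (?c a)" if a: "a \<in> pcarrier E" for a
  proof -
    have "Option.bind (pplus E a (?c a)) (\<lambda>x. pplus E x ?z) = Some ?o"
      using ea_compl_sum[OF E a] o1 z by simp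
    hence "Option.bind (pplus E (?c a) ?z) (\<lambda>y. pplus E a y) = Some ?o"
      using F(6)[OF a F(3)[OF a] F(1)] by simp
    then obtain y where y: "pplus E (?c a) ?z = Some y" "pplus E a y = Some ?o"
      by (cases "pplus E (?c a) ?z") auto
    have "y \<in> pcarrier E" using F(4)[OF F(3)[OF a] F(1) y(1)] .
    hence "y = ?c a" using F(7)[OF a] y(2) by blast
    thus ?thesis using y(1) by simp
  qed
  have "pplus E (?c b) b = Some ?o" using ea_compl_sum[OF E b] F(5)[OF b F(3)[OF b]] by simp
  hence "b = ?c (?c b)" using F(7)[OF F(3)[OF b] b] by blast
  thus ?thesis using ii[OF F(3)[OF b]] by simp
qed


lemma ph_add: "pogroup_hom g \<Longrightarrow> g (x + y) = g x + g y"
  unfolding pogroup_hom_def by blast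
lemma ph_mono: "pogroup_hom g \<Longrightarrow> x \<le> y \<Longrightarrow> g x \<le> g y"
  unfolding pogroup_hom_def mono_def by blast
lemma ph_zero: "pogroup_hom g \<Longrightarrow> g 0 = 0"
  using ph_add[of g 0 0] by simp
lemma ph_uminus: "pogroup_hom g \<Longrightarrow> g (- x) = - g x"
proof -
  assume g: "pogroup_hom g"
  have "g x + g (-x) = 0" using ph_add[OF g, of x "-x"] ph_zero[OF g] by simp
  thus ?thesis by (metis minus_unique)
qed
lemma ph_sum: "pogroup_hom g \<Longrightarrow> g (\<Sum>_<(n::nat). u) = (\<Sum>_<n. g u)"
  by (induction n) (simp_all add: ph_zero ph_add)

lemma H_plus: "pplus (ea_hom_gea E (Gamma v)) f g =
   (if \<forall>a\<in>pcarrier E. f a + g a \<le> v then Some (restrict (\<lambda>a. f a + g a) (pcarrier E)) else None)"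
proof (cases "\<forall>a\<in>pcarrier E. f a + g a \<le> v")
  case True
  have "restrict (\<lambda>a. the (if f a + g a \<le> v then Some (f a + g a) else None)) (pcarrier E)
     = restrict (\<lambda>a. f a + g a) (pcarrier E)"
    by (rule restrict_ext) (use True in simp)
  thus ?thesis using True by (simp add: ea_hom_gea_def Gamma_def)
next
  case False
  thus ?thesis by (simp add: ea_hom_gea_def Gamma_def) blast
qed

lemma H_carrier: "f \<in> pcarrier (ea_hom_gea E (Gamma v)) \<longleftrightarrow>
   f \<in> extensional (pcarrier E) \<and> (\<forall>a\<in>pcarrier E. 0 \<le> f a \<and> f a \<le> v) \<and> f (pzero E) = 0 \<and>
   (\<forall>a\<in>pcarrier E. \<forall>b\<in>pcarrier E. \<forall>c. pplus E a b = Some c \<longrightarrow> f a + f b \<le> v \<and> f a + f b = f c)"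
proof -
  have eq: "\<And>x y z. pplus (Gamma v) x y = Some z \<longleftrightarrow> x + y \<le> v \<and> x + y = z"
    by (simp add: Gamma_def)
  have car: "pcarrier (Gamma v) = {b. 0 \<le> b \<and> b \<le> v}" and pz: "pzero (Gamma v) = 0"
    by (simp_all add: Gamma_def)
  show ?thesis unfolding ea_hom_gea_def pa.simps car pz eq mem_Collect_eq by blast
qed

lemma H_zero: "pzero (ea_hom_gea E (Gamma v)) = restrict (\<lambda>_. 0) (pcarrier E)"
  by (simp add: ea_hom_gea_def Gamma_def)

lemma pos_sum_zero: "(0::'a::ordered_ab_group_add) \<le> x \<Longrightarrow> 0 \<le> y \<Longrightarrow> x + y = 0 \<Longrightarrow> x = 0"
  by (metis add_increasing2 antisym order_refl)


lemma gea_H: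
  fixes v :: "'b::ordered_ab_group_add"
  assumes E: "effect_algebra E" and v: "0 \<le> v"
  shows "gea (ea_hom_gea E (Gamma v))"
proof -
  let ?H = "ea_hom_gea E (Gamma v)" and ?C = "pcarrier E"
  note F = ea_facts[OF E]
  have c1: "pzero ?H \<in> pcarrier ?H"
    unfolding H_zero H_carrier
  proof (intro conjI ballI allI impI)
    fix a b c assume a: "a \<in> ?C" and b: "b \<in> ?C" and abc: "pplus E a b = Some c"
    have "c \<in> ?C" using F(4)[OF a b abc] .
    thus "restrict (\<lambda>_. 0::'b) ?C a + restrict (\<lambda>_. 0) ?C b \<le> v"
      "restrict (\<lambda>_. 0::'b) ?C a + restrict (\<lambda>_. 0) ?C b = restrict (\<lambda>_. 0) ?C c"
      using a b v by simp_all
  next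
    show "restrict (\<lambda>_. 0::'b) ?C \<in> extensional ?C" by simp
  next
    show "restrict (\<lambda>_. 0::'b) ?C (pzero E) = 0" using F(1) by simp
  next
    fix a assume "a \<in> ?C"
    thus "0 \<le> restrict (\<lambda>_. 0::'b) ?C a" "restrict (\<lambda>_. 0::'b) ?C a \<le> v" using v by simp_all
  qed
  have c2: "\<forall>f\<in>pcarrier ?H. \<forall>g\<in>pcarrier ?H. \<forall>h. pplus ?H f g = Some h \<longrightarrow> h \<in> pcarrier ?H"
  proof (intro ballI allI impI)
    fix f g h assume f: "f \<in> pcarrier ?H" and g: "g \<in> pcarrier ?H" and h: "pplus ?H f g = Some h"
    have le: "\<forall>a\<in>?C. f a + g a \<le> v" and hd: "h = restrict (\<lambda>a. f a + g a) ?C"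
      using h unfolding H_plus by (auto split: if_splits)
    show "h \<in> pcarrier ?H" unfolding H_carrier hd
    proof (intro conjI ballI allI impI)
      fix a b c assume a: "a \<in> ?C" and b: "b \<in> ?C" and abc: "pplus E a b = Some c"
      have c: "c \<in> ?C" using F(4)[OF a b abc] .
      have "f a + f b = f c" "g a + g b = g c" using f g a b abc unfolding H_carrier by blast+
      hence eq: "(f a + g a) + (f b + g b) = f c + g c" by (simp add: algebra_simps)
      thus "restrict (\<lambda>a. f a + g a) ?C a + restrict (\<lambda>a. f a + g a) ?C b = restrict (\<lambda>a. f a + g a) ?C c"
        using a b c by simp
      show "restrict (\<lambda>a. f a + g a) ?C a + restrict (\<lambda>a. f a + g a) ?C b \<le> v"
        using a b c eq le by simp
    next
      show "restrict (\<lambda>a. f a + g a) ?C \<in> extensional ?C" by simp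
    next
      have "f (pzero E) = 0" "g (pzero E) = 0" using f g unfolding H_carrier by blast+
      thus "restrict (\<lambda>a. f a + g a) ?C (pzero E) = 0" using F(1) by simp
    next
      fix a assume a: "a \<in> ?C"
      have "0 \<le> f a" "0 \<le> g a" using f g a unfolding H_carrier by blast+
      thus "0 \<le> restrict (\<lambda>a. f a + g a) ?C a" using a by simp
      show "restrict (\<lambda>a. f a + g a) ?C a \<le> v" using a le by simp
    qed
  qed
  have c3: "\<forall>f\<in>pcarrier ?H. \<forall>g\<in>pcarrier ?H. pplus ?H f g = pplus ?H g f"
    unfolding H_plus by (auto simp: add.commute)
  have c4: "\<forall>f\<in>pcarrier ?H. \<forall>g\<in>pcarrier ?H. \<forall>h\<in>pcarrier ?H.
        Option.bind (pplus ?H f g) (\<lambda>x. pplus ?H x h) = Option.bind (pplus ?H g h) (\<lambda>y. pplus ?H f y)"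
  proof (intro ballI)
    fix f g h assume f: "f \<in> pcarrier ?H" and g: "g \<in> pcarrier ?H" and h: "h \<in> pcarrier ?H"
    have nn: "0 \<le> f a" "0 \<le> g a" "0 \<le> h a" if "a \<in> ?C" for a
      using f g h that unfolding H_carrier by auto
    show "Option.bind (pplus ?H f g) (\<lambda>x. pplus ?H x h) = Option.bind (pplus ?H g h) (\<lambda>y. pplus ?H f y)"
    proof (cases "\<forall>a\<in>?C. f a + g a + h a \<le> v")
      case True
      have "\<forall>a\<in>?C. f a + g a \<le> v" using True nn by (meson add_increasing2 order_refl order_trans)
      moreover have "\<forall>a\<in>?C. g a + h a \<le> v" using True nn
        by (metis add.assoc add_increasing order_refl order_trans)
      ultimately show ?thesis using True unfolding H_plus by (auto simp: add.assoc intro!: restrict_ext)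
    next
      case False
      have "Option.bind (pplus ?H f g) (\<lambda>x. pplus ?H x h) = None"
        using False unfolding H_plus by auto
      moreover have "Option.bind (pplus ?H g h) (\<lambda>y. pplus ?H f y) = None"
        using False unfolding H_plus by (auto simp: add.assoc)
      ultimately show ?thesis by simp
    qed
  qed
  have c5: "\<forall>f\<in>pcarrier ?H. pplus ?H f (pzero ?H) = Some f"
  proof
    fix f assume f: "f \<in> pcarrier ?H"
    hence ex: "f \<in> extensional ?C" and le: "\<forall>a\<in>?C. f a \<le> v" unfolding H_carrier by blast+
    have "restrict (\<lambda>a. f a + restrict (\<lambda>_. 0) ?C a) ?C = restrict f ?C"
      by (auto intro: restrict_ext)
    also have "\<dots> = f" using ex by (simp add: extensional_restrict)
    finally show "pplus ?H f (pzero ?H) = Some f" using le unfolding H_plus H_zero by simp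
  qed
  have c6: "\<forall>f\<in>pcarrier ?H. \<forall>g\<in>pcarrier ?H. \<forall>h\<in>pcarrier ?H.
        pplus ?H f g \<noteq> None \<and> pplus ?H f g = pplus ?H f h \<longrightarrow> g = h"
  proof (intro ballI impI)
    fix f g h assume f: "f \<in> pcarrier ?H" and g: "g \<in> pcarrier ?H" and h: "h \<in> pcarrier ?H"
      and e: "pplus ?H f g \<noteq> None \<and> pplus ?H f g = pplus ?H f h"
    have "restrict (\<lambda>a. f a + g a) ?C = restrict (\<lambda>a. f a + h a) ?C"
      using e unfolding H_plus by (auto split: if_splits)
    hence "\<forall>a\<in>?C. g a = h a"
    proof (intro ballI)
      fix a assume a: "a \<in> ?C" and r: "restrict (\<lambda>a. f a + g a) ?C = restrict (\<lambda>a. f a + h a) ?C"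
      have "restrict (\<lambda>a. f a + g a) ?C a = restrict (\<lambda>a. f a + h a) ?C a" using r by simp
      thus "g a = h a" using a by simp
    qed
    moreover have "g \<in> extensional ?C" "h \<in> extensional ?C" using g h unfolding H_carrier by blast+
    ultimately show "g = h" by (metis extensionalityI)
  qed
  have c7: "\<forall>f\<in>pcarrier ?H. \<forall>g\<in>pcarrier ?H. pplus ?H f g = Some (pzero ?H) \<longrightarrow> f = pzero ?H \<and> g = pzero ?H"
  proof (intro ballI impI)
    fix f g assume f: "f \<in> pcarrier ?H" and g: "g \<in> pcarrier ?H" and e: "pplus ?H f g = Some (pzero ?H)"
    have "restrict (\<lambda>a. f a + g a) ?C = restrict (\<lambda>a. 0) ?C"
      using e unfolding H_plus H_zero by (auto split: if_splits)
    hence s: "\<forall>a\<in>?C. f a + g a = 0"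
    proof (intro ballI)
      fix a assume a: "a \<in> ?C" and r: "restrict (\<lambda>a. f a + g a) ?C = restrict (\<lambda>a. 0) ?C"
      have "restrict (\<lambda>a. f a + g a) ?C a = restrict (\<lambda>a. 0) ?C a" using r by simp
      thus "f a + g a = 0" using a by simp
    qed
    have nn: "0 \<le> f a" "0 \<le> g a" if "a \<in> ?C" for a
      using f g that unfolding H_carrier by blast+
    have "\<forall>a\<in>?C. f a = 0" using s nn pos_sum_zero by blast
    moreover have "\<forall>a\<in>?C. g a = 0" using s nn pos_sum_zero by (metis add.commute)
    moreover have "f \<in> extensional ?C" "g \<in> extensional ?C" using f g unfolding H_carrier by blast+
    ultimately show "f = pzero ?H \<and> g = pzero ?H" unfolding H_zero
      by (auto intro!: extensionalityI[where A="?C"])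
  qed
  show ?thesis unfolding gea_def using c1 c2 c3 c4 c5 c6 c7 by blast
qed



lemma P_plus: "pplus (po_hom_gea u v) g h = (if g u + h u \<le> v then Some (\<lambda>x. g x + h x) else None)"
  by (simp add: po_hom_gea_def)
lemma P_carrier: "g \<in> pcarrier (po_hom_gea u v) \<longleftrightarrow> pogroup_hom g \<and> g u \<le> v"
  by (simp add: po_hom_gea_def)
lemma P_zero: "pzero (po_hom_gea u v) = (\<lambda>_. 0)"
  by (simp add: po_hom_gea_def)

lemma ph_add_fun: "pogroup_hom g \<Longrightarrow> pogroup_hom h \<Longrightarrow> pogroup_hom (\<lambda>x. g x + h x)"
  unfolding pogroup_hom_def mono_def by (auto simp: algebra_simps intro: add_mono)

lemma ph_unit_zero:
  assumes u: "order_unit u" and g: "pogroup_hom g" and gu: "g u = 0"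
  shows "g x = 0"
proof -
  obtain n :: nat where n: "- (\<Sum>_<n. u) \<le> x" "x \<le> (\<Sum>_<n. u)" using u unfolding order_unit_def by blast
  have s: "g (\<Sum>_<n. u) = 0" using ph_sum[OF g] gu by simp
  have "g x \<le> 0" using ph_mono[OF g n(2)] s by simp
  moreover have "0 \<le> g x" using ph_mono[OF g n(1)] s ph_uminus[OF g] by simp
  ultimately show ?thesis by simp
qed

lemma gea_P:
  fixes u :: "'g::ordered_ab_group_add" and v :: "'b::ordered_ab_group_add"
  assumes u: "order_unit u" and v: "0 \<le> v"
  shows "gea (po_hom_gea u v)"
proof -
  let ?P = "po_hom_gea u v"
  have u0: "0 \<le> u" using u unfolding order_unit_def by simp
  have nn: "0 \<le> g u" if "pogroup_hom g" for g :: "'g \<Rightarrow> 'b"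
    using ph_mono[OF that u0] ph_zero[OF that] by simp
  have z: "pogroup_hom (\<lambda>_::'g. 0::'b)" unfolding pogroup_hom_def mono_def by simp
  have c1: "pzero ?P \<in> pcarrier ?P" unfolding P_zero P_carrier using z v by simp
  have c2: "\<forall>f\<in>pcarrier ?P. \<forall>g\<in>pcarrier ?P. \<forall>h. pplus ?P f g = Some h \<longrightarrow> h \<in> pcarrier ?P"
  proof (intro ballI allI impI)
    fix f g h assume f: "f \<in> pcarrier ?P" and g: "g \<in> pcarrier ?P" and e: "pplus ?P f g = Some h"
    have "f u + g u \<le> v" and hd: "h = (\<lambda>x. f x + g x)" using e unfolding P_plus by (auto split: if_splits)
    moreover have "pogroup_hom f" "pogroup_hom g" using f g unfolding P_carrier by auto
    ultimately show "h \<in> pcarrier ?P" unfolding P_carrier using ph_add_fun by simp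
  qed
  have c3: "\<forall>f\<in>pcarrier ?P. \<forall>g\<in>pcarrier ?P. pplus ?P f g = pplus ?P g f"
    unfolding P_plus by (auto simp: add.commute)
  have c4: "\<forall>f\<in>pcarrier ?P. \<forall>g\<in>pcarrier ?P. \<forall>h\<in>pcarrier ?P.
        Option.bind (pplus ?P f g) (\<lambda>x. pplus ?P x h) = Option.bind (pplus ?P g h) (\<lambda>y. pplus ?P f y)"
  proof (intro ballI)
    fix f g h assume f: "f \<in> pcarrier ?P" and g: "g \<in> pcarrier ?P" and h: "h \<in> pcarrier ?P"
    have n: "0 \<le> f u" "0 \<le> g u" "0 \<le> h u" using f g h nn unfolding P_carrier by auto
    show "Option.bind (pplus ?P f g) (\<lambda>x. pplus ?P x h) = Option.bind (pplus ?P g h) (\<lambda>y. pplus ?P f y)"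
    proof (cases "f u + g u + h u \<le> v")
      case True
      have "f u + g u \<le> v" using True n by (meson add_increasing2 order_refl order_trans)
      moreover have "g u + h u \<le> v" using True n
        by (metis add.assoc add_increasing order_refl order_trans)
      ultimately show ?thesis using True unfolding P_plus by (auto simp: add.assoc)
    next
      case False
      thus ?thesis unfolding P_plus by (auto simp: add.assoc)
    qed
  qed
  have c5: "\<forall>f\<in>pcarrier ?P. pplus ?P f (pzero ?P) = Some f"
  proof
    fix f assume "f \<in> pcarrier ?P"
    hence "f u \<le> v" unfolding P_carrier by simp
    thus "pplus ?P f (pzero ?P) = Some f" unfolding P_plus P_zero by simp
  qed
  have c6: "\<forall>f\<in>pcarrier ?P. \<forall>g\<in>pcarrier ?P. \<forall>h\<in>pcarrier ?P.
        pplus ?P f g \<noteq> None \<and> pplus ?P f g = pplus ?P f h \<longrightarrow> g = h"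
    unfolding P_plus by (auto split: if_splits simp: fun_eq_iff)
  have c7: "\<forall>f\<in>pcarrier ?P. \<forall>g\<in>pcarrier ?P. pplus ?P f g = Some (pzero ?P) \<longrightarrow> f = pzero ?P \<and> g = pzero ?P"
  proof (intro ballI impI)
    fix f g assume f: "f \<in> pcarrier ?P" and g: "g \<in> pcarrier ?P" and e: "pplus ?P f g = Some (pzero ?P)"
    have s: "\<And>x. f x + g x = 0" using e unfolding P_plus P_zero by (auto split: if_splits simp: fun_eq_iff)
    have fh: "pogroup_hom f" "pogroup_hom g" using f g unfolding P_carrier by auto
    have "f u = 0" using pos_sum_zero[OF nn[OF fh(1)] nn[OF fh(2)] s] .
    moreover have "g u = 0" using pos_sum_zero[OF nn[OF fh(2)] nn[OF fh(1)]] s by (metis add.commute)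
    ultimately show "f = pzero ?P \<and> g = pzero ?P" unfolding P_zero
      using ph_unit_zero[OF u fh(1)] ph_unit_zero[OF u fh(2)] by auto
  qed
  show ?thesis unfolding gea_def using c1 c2 c3 c4 c5 c6 c7 by blast
qed



lemma morph_Gamma:
  "ea_morphism E (Gamma w) \<phi> \<longleftrightarrow> (\<forall>a\<in>pcarrier E. 0 \<le> \<phi> a \<and> \<phi> a \<le> w) \<and> \<phi> (ea_one E) = w \<and>
     (\<forall>a\<in>pcarrier E. \<forall>b\<in>pcarrier E. \<forall>c. pplus E a b = Some c \<longrightarrow> \<phi> a + \<phi> b \<le> w \<and> \<phi> a + \<phi> b = \<phi> c)"
proof -
  have eq: "\<And>x y z. pplus (Gamma w) x y = Some z \<longleftrightarrow> x + y \<le> w \<and> x + y = z"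
    by (simp add: Gamma_def)
  have car: "pcarrier (Gamma w) = {b. 0 \<le> b \<and> b \<le> w}" and o: "ea_one (Gamma w) = w"
    by (simp_all add: Gamma_def)
  show ?thesis unfolding ea_morphism_def car o eq mem_Collect_eq by blast
qed

lemma morph_zero:
  assumes E: "effect_algebra E" and m: "ea_morphism E (Gamma w) \<phi>"
  shows "\<phi> (pzero E) = 0"
proof -
  have "pplus E (pzero E) (pzero E) = Some (pzero E)" using ea_zero_right[OF E ea_facts(1)[OF E]] .
  hence "\<phi> (pzero E) + \<phi> (pzero E) = \<phi> (pzero E)" using m ea_facts(1)[OF E] unfolding morph_Gamma by blast
  thus ?thesis by (metis add_cancel_right_right)
qed

lemma morph_comp:
  assumes m: "ea_morphism E (Gamma u) \<eta>" and g: "pogroup_hom g"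
  shows "ea_morphism E (Gamma (g u)) (\<lambda>x. g (\<eta> x))"
  unfolding morph_Gamma
proof (intro conjI ballI allI impI)
  fix a assume a: "a \<in> pcarrier E"
  have "0 \<le> \<eta> a" "\<eta> a \<le> u" using m a unfolding morph_Gamma by auto
  thus "0 \<le> g (\<eta> a)" "g (\<eta> a) \<le> g u" using ph_mono[OF g] ph_zero[OF g] by metis+
next
  show "g (\<eta> (ea_one E)) = g u" using m unfolding morph_Gamma by simp
next
  fix a b c assume a: "a \<in> pcarrier E" and b: "b \<in> pcarrier E" and c: "pplus E a b = Some c"
  have "\<eta> a + \<eta> b \<le> u" "\<eta> a + \<eta> b = \<eta> c" using m a b c unfolding morph_Gamma by blast+
  thus "g (\<eta> a) + g (\<eta> b) \<le> g u" "g (\<eta> a) + g (\<eta> b) = g (\<eta> c)"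
    using ph_add[OF g] ph_mono[OF g] by metis+
qed

lemma H_morph:
  assumes E: "effect_algebra E" and f: "f \<in> pcarrier (ea_hom_gea E (Gamma v))"
  shows "ea_morphism E (Gamma (f (ea_one E))) f"
  unfolding morph_Gamma
proof (intro conjI ballI allI impI)
  note F = ea_facts[OF E]
  fix a assume a: "a \<in> pcarrier E"
  show "0 \<le> f a" using f a unfolding H_carrier by blast
  have "f a + f (ea_compl E a) = f (ea_one E)" "0 \<le> f (ea_compl E a)"
    using f a F(3)[OF a] ea_compl_sum[OF E a] unfolding H_carrier by blast+
  thus "f a \<le> f (ea_one E)" by (metis add_increasing2 order_refl)
next
  fix a b c assume a: "a \<in> pcarrier E" and b: "b \<in> pcarrier E" and c: "pplus E a b = Some c"
  note F = ea_facts[OF E]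
  have cc: "c \<in> pcarrier E" using F(4)[OF a b c] .
  have e: "f a + f b = f c" using f a b c unfolding H_carrier by blast
  thus "f a + f b = f c" .
  have "f c + f (ea_compl E c) = f (ea_one E)" "0 \<le> f (ea_compl E c)"
    using f cc F(3)[OF cc] ea_compl_sum[OF E cc] unfolding H_carrier by blast+
  thus "f a + f b \<le> f (ea_one E)" using e by (metis add_increasing2 order_refl)
qed simp


lemma my_ex1_unique: "\<exists>!x. P x \<Longrightarrow> P a \<Longrightarrow> P b \<Longrightarrow> a = b"
  by blast

lemma iso_PH:
  fixes E :: "'e ea" and u :: "'g::ordered_ab_group_add" and \<eta> :: "'e \<Rightarrow> 'g"
    and v :: "'b::ordered_ab_group_add"
  assumes E: "effect_algebra E"
    and U: "universal_group E u \<eta> TYPE('b)"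
    and v: "0 \<le> v"
  shows "gea_iso (po_hom_gea u v) (ea_hom_gea E (Gamma v)) (\<lambda>g. restrict (g \<circ> \<eta>) (pcarrier E))"
proof -
  let ?P = "po_hom_gea u v" and ?H = "ea_hom_gea E (Gamma v)" and ?C = "pcarrier E"
  let ?phi = "\<lambda>g. restrict (g \<circ> \<eta>) ?C"
  note F = ea_facts[OF E]
  have u: "order_unit u" and m: "ea_morphism E (Gamma u) \<eta>"
    and univ: "\<And>w \<phi>. 0 \<le> (w::'b) \<Longrightarrow> ea_morphism E (Gamma w) \<phi> \<Longrightarrow>
        \<exists>!g. pogroup_hom g \<and> g u = w \<and> (\<forall>x\<in>?C. g (\<eta> x) = \<phi> x)"
    using U unfolding universal_group_def by blast+
  have u0: "0 \<le> u" using u unfolding order_unit_def by simp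
  have eta1: "\<eta> (ea_one E) = u" using m unfolding morph_Gamma by simp
  have eta0: "\<eta> (pzero E) = 0" using morph_zero[OF E m] .
  have etab: "0 \<le> \<eta> a" "\<eta> a \<le> u" if "a \<in> ?C" for a using m that unfolding morph_Gamma by auto
  have into: "?phi g \<in> pcarrier ?H" if g: "g \<in> pcarrier ?P" for g
  proof -
    have gh: "pogroup_hom g" and gu: "g u \<le> v" using g unfolding P_carrier by auto
    have mm: "ea_morphism E (Gamma (g u)) (\<lambda>x. g (\<eta> x))" using morph_comp[OF m gh] .
    show ?thesis unfolding H_carrier
    proof (intro conjI ballI allI impI)
      fix a assume a: "a \<in> ?C"
      show "0 \<le> ?phi g a" "?phi g a \<le> v" using mm a gu unfolding morph_Gamma by (auto intro: order_trans)
    next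
      show "?phi g (pzero E) = 0" using F(1) eta0 ph_zero[OF gh] by simp
    next
      fix a b c assume a: "a \<in> ?C" and b: "b \<in> ?C" and c: "pplus E a b = Some c"
      have cc: "c \<in> ?C" using F(4)[OF a b c] .
      show "?phi g a + ?phi g b \<le> v" "?phi g a + ?phi g b = ?phi g c"
        using mm a b c cc gu unfolding morph_Gamma by (auto intro: order_trans)
    qed simp
  qed
  have inj: "inj_on ?phi (pcarrier ?P)"
  proof (rule inj_onI)
    fix g h assume g: "g \<in> pcarrier ?P" and h: "h \<in> pcarrier ?P" and e: "?phi g = ?phi h"
    have gh: "pogroup_hom g" "pogroup_hom h" using g h unfolding P_carrier by auto
    have eq: "\<forall>x\<in>?C. g (\<eta> x) = h (\<eta> x)" using e by (metis comp_apply restrict_apply')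
    hence hu: "h u = g u" using F(2) eta1 by metis
    have gu0: "0 \<le> g u" using ph_mono[OF gh(1) u0] ph_zero[OF gh(1)] by simp
    have "\<exists>!k. pogroup_hom k \<and> k u = g u \<and> (\<forall>x\<in>?C. k (\<eta> x) = g (\<eta> x))"
      using univ[OF gu0 morph_comp[OF m gh(1)]] .
    moreover have "pogroup_hom g \<and> g u = g u \<and> (\<forall>x\<in>?C. g (\<eta> x) = g (\<eta> x))" using gh by simp
    moreover have "pogroup_hom h \<and> h u = g u \<and> (\<forall>x\<in>?C. h (\<eta> x) = g (\<eta> x))" using gh hu eq by simp
    ultimately show "g = h"
      by (rule my_ex1_unique[where P="\<lambda>k. pogroup_hom k \<and> k u = g u \<and> (\<forall>x\<in>?C. k (\<eta> x) = g (\<eta> x))"])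
  qed
  have onto: "pcarrier ?H \<subseteq> ?phi ` pcarrier ?P"
  proof
    fix f assume f: "f \<in> pcarrier ?H"
    have fm: "ea_morphism E (Gamma (f (ea_one E))) f" using H_morph[OF E f] .
    have f1: "0 \<le> f (ea_one E)" "f (ea_one E) \<le> v" using f F(2) unfolding H_carrier by auto
    obtain g where g: "pogroup_hom g" "g u = f (ea_one E)" "\<forall>x\<in>?C. g (\<eta> x) = f x"
      using univ[OF f1(1) fm] by blast
    have gP: "g \<in> pcarrier ?P" using g f1 unfolding P_carrier by simp
    have "?phi g = restrict f ?C" using g(3) by (auto intro: restrict_ext)
    also have "\<dots> = f" using f unfolding H_carrier by (simp add: extensional_restrict)
    finally show "f \<in> ?phi ` pcarrier ?P" using gP by (metis image_eqI)
  qed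
  have bij: "bij_betw ?phi (pcarrier ?P) (pcarrier ?H)"
    unfolding bij_betw_def using inj onto into by blast
  have zero: "?phi (pzero ?P) = pzero ?H" unfolding P_zero H_zero by (auto intro: restrict_ext)
  have sums: "\<forall>g\<in>pcarrier ?P. \<forall>h\<in>pcarrier ?P. pplus ?H (?phi g) (?phi h) = map_option ?phi (pplus ?P g h)"
  proof (intro ballI)
    fix g h assume g: "g \<in> pcarrier ?P" and h: "h \<in> pcarrier ?P"
    have gh: "pogroup_hom g" "pogroup_hom h" using g h unfolding P_carrier by auto
    have iff: "(\<forall>a\<in>?C. ?phi g a + ?phi h a \<le> v) \<longleftrightarrow> g u + h u \<le> v"
    proof
      assume "\<forall>a\<in>?C. ?phi g a + ?phi h a \<le> v"
      thus "g u + h u \<le> v" using F(2) eta1 by force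
    next
      assume le: "g u + h u \<le> v"
      show "\<forall>a\<in>?C. ?phi g a + ?phi h a \<le> v"
      proof
        fix a assume a: "a \<in> ?C"
        have "g (\<eta> a) + h (\<eta> a) \<le> g u + h u"
          using add_mono ph_mono[OF gh(1) etab(2)[OF a]] ph_mono[OF gh(2) etab(2)[OF a]] by blast
        thus "?phi g a + ?phi h a \<le> v" using a le by (auto intro: order_trans)
      qed
    qed
    have r: "restrict (\<lambda>a. ?phi g a + ?phi h a) ?C = ?phi (\<lambda>x. g x + h x)"
      by (auto intro: restrict_ext)
    show "pplus ?H (?phi g) (?phi h) = map_option ?phi (pplus ?P g h)"
      unfolding H_plus P_plus using iff r by simp
  qed
  show ?thesis unfolding gea_iso_def using bij zero sums by blast
qed

theorem lemma4p9:
  fixes E :: "'e ea" and u :: "'g::ordered_ab_group_add" and \<eta> :: "'e \<Rightarrow> 'g"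
    and v :: "'b::ordered_ab_group_add"
  assumes "effect_algebra E"
    and "universal_group E u \<eta> TYPE('b)"
    and "order_unit v"
  shows "gea (ea_hom_gea E (Gamma v)) \<and> gea (po_hom_gea u v) \<and>
    gea_iso (po_hom_gea u v) (ea_hom_gea E (Gamma v)) (\<lambda>g. restrict (g \<circ> \<eta>) (pcarrier E)) \<and>
    (\<forall>(E'::'e2 ea) (u'::'g2::ordered_ab_group_add) \<eta>' f k.
       effect_algebra E' \<and> universal_group E' u' \<eta>' TYPE('b) \<and> ea_morphism E' E f \<and>
       pogroup_hom k \<and> k u' = u \<and> (\<forall>x\<in>pcarrier E'. k (\<eta>' x) = \<eta> (f x)) \<longrightarrow>
       (\<forall>g\<in>pcarrier (po_hom_gea u v).
          restrict ((g \<circ> k) \<circ> \<eta>') (pcarrier E') =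
          restrict (restrict (g \<circ> \<eta>) (pcarrier E) \<circ> f) (pcarrier E'))) \<and>
    (\<forall>(v'::'c::ordered_ab_group_add) h.
       order_unit v' \<and> pogroup_hom h \<and> h v = v' \<longrightarrow>
       (\<forall>g\<in>pcarrier (po_hom_gea u v).
          restrict ((h \<circ> g) \<circ> \<eta>) (pcarrier E) =
          restrict (h \<circ> restrict (g \<circ> \<eta>) (pcarrier E)) (pcarrier E)))"
proof -
  have v0: "0 \<le> v" using assms(3) unfolding order_unit_def by simp
  have u: "order_unit u" using assms(2) unfolding universal_group_def by blast
  have nat1: "\<forall>(E'::'e2 ea) (u'::'g2::ordered_ab_group_add) \<eta>' f k.
       effect_algebra E' \<and> universal_group E' u' \<eta>' TYPE('b) \<and> ea_morphism E' E f \<and>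
       pogroup_hom k \<and> k u' = u \<and> (\<forall>x\<in>pcarrier E'. k (\<eta>' x) = \<eta> (f x)) \<longrightarrow>
       (\<forall>g\<in>pcarrier (po_hom_gea u v).
          restrict ((g \<circ> k) \<circ> \<eta>') (pcarrier E') =
          restrict (restrict (g \<circ> \<eta>) (pcarrier E) \<circ> f) (pcarrier E'))"
  proof (intro allI impI ballI)
    fix E' :: "'e2 ea" and u' :: 'g2 and \<eta>' f k g
    assume A: "effect_algebra E' \<and> universal_group E' u' \<eta>' TYPE('b) \<and> ea_morphism E' E f \<and>
       pogroup_hom k \<and> k u' = u \<and> (\<forall>x\<in>pcarrier E'. k (\<eta>' x) = \<eta> (f x))"
    have fx: "\<forall>x\<in>pcarrier E'. f x \<in> pcarrier E" using A unfolding ea_morphism_def by blast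
    show "restrict ((g \<circ> k) \<circ> \<eta>') (pcarrier E') =
          restrict (restrict (g \<circ> \<eta>) (pcarrier E) \<circ> f) (pcarrier E')"
      using A fx by (auto intro: restrict_ext)
  qed
  have nat2: "\<forall>(v'::'c::ordered_ab_group_add) h.
       order_unit v' \<and> pogroup_hom h \<and> h v = v' \<longrightarrow>
       (\<forall>g\<in>pcarrier (po_hom_gea u v).
          restrict ((h \<circ> g) \<circ> \<eta>) (pcarrier E) =
          restrict (h \<circ> restrict (g \<circ> \<eta>) (pcarrier E)) (pcarrier E))"
    by (auto intro: restrict_ext)
  show ?thesis using gea_H[OF assms(1) v0] gea_P[OF u v0] iso_PH[OF assms(1,2) v0] nat1 nat2
    by blast
qed


end
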